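(* Let $r\ge 3$, $s_r \ge \cdots \ge s_1 \ge 1$, and $m,n\ge 1$ be integers. Then $$Z(m,n,s_1,\ldots,s_r) \le \frac{(s_2+\cdots+s_r-r+1)^{1/s_1}}{r-1}\, m\, n^{\,r-1-\frac{1}{s_1\cdots s_{r-1}}} + (s_1-1)\binom{n}{r-1}.$$
   Context: An $r$-graph is a set of $r$-element subsets (edges) of a finite vertex set. An $m$ by $n$ semibipartite $r$-graph is an $r$-graph $\mathcal{H}$ with vertex set partitioned into $V_1,V_2$, $|V_1|=m$, $|V_2|=n$, such that every edge contains exactly one vertex of $V_1$. $K^r_{s_1,\ldots,s_r}$ is the complete $r$-partite $r$-graph with parts $W_1,\ldots,W_r$ of sizes $s_1,\ldots,s_r$ (edges: all $r$-sets with exactly one vertex in each part). An ordered copy of $K^r_{s_1,\ldots,s_r}$ in such $\mathcal{H}$ is a copy in which $W_1\subseteq V_1$ and $W_2,\ldots,W_r\subseteq V_2$. $Z(m,n,s_1,\ldots,s_r)$ is the maximum number of edges in an $m$ by $n$ semibipartite $r$-graph with no ordered copy of $K^r_{s_1,\ldots,s_r}$. *)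

theory Defs
  imports Complex_Main
begin

definition semibipartite :: "'v set \<Rightarrow> 'v set \<Rightarrow> nat \<Rightarrow> 'v set set \<Rightarrow> bool" where
  "semibipartite V1 V2 r H \<longleftrightarrow> V1 \<inter> V2 = {} \<and>
     (\<forall>e\<in>H. e \<subseteq> V1 \<union> V2 \<and> card e = r \<and> card (e \<inter> V1) = 1)"

definition has_ordered_copy ::
  "'v set \<Rightarrow> 'v set \<Rightarrow> nat \<Rightarrow> (nat \<Rightarrow> nat) \<Rightarrow> 'v set set \<Rightarrow> bool" where
  "has_ordered_copy V1 V2 r s H \<longleftrightarrow>
     (\<exists>W :: nat \<Rightarrow> 'v set.
        (\<forall>i\<in>{1..r}. finite (W i) \<and> card (W i) = s i) \<and>
        W 1 \<subseteq> V1 \<and> (\<forall>i\<in>{2..r}. W i \<subseteq> V2) \<and>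
        (\<forall>i\<in>{1..r}. \<forall>j\<in>{1..r}. i \<noteq> j \<longrightarrow> W i \<inter> W j = {}) \<and>
        (\<forall>f. (\<forall>i\<in>{1..r}. f i \<in> W i) \<longrightarrow> f ` {1..r} \<in> H))"

text \<open>Z(m,n,s_1,...,s_r), computed on the canonical vertex set V1 = {0..<m}, V2 = {m..<m+n}
  (the value is invariant under relabelling vertices).\<close>
definition Z :: "nat \<Rightarrow> nat \<Rightarrow> nat \<Rightarrow> (nat \<Rightarrow> nat) \<Rightarrow> nat" where
  "Z m n r s = Max {card H | H :: nat set set.
      semibipartite {0..<m} {m..<m+n} r H \<and> \<not> has_ordered_copy {0..<m} {m..<m+n} r s H}"

end

theory Submission
  imports Defs "HOL-Analysis.Convex"
begin

lemma convex_power_nonneg: "convex_on {0::real..} (\<lambda>x. x^n)"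
proof (intro f''_ge0_imp_convex)
  show "((\<lambda>x. x ^ n) has_real_derivative of_nat n * x^(n-1)) (at x)" for x
    by (rule derivative_eq_intros | simp)+
  show "((\<lambda>x. of_nat n * x^(n-1)) has_real_derivative of_nat n * of_nat (n-1) * x^(n-2)) (at x)" for x
    by (rule derivative_eq_intros | simp add: eval_nat_numeral)+
  show "\<And>x. x \<in> {0::real..} \<Longrightarrow> 0 \<le> real n * real (n - 1) * x ^ (n - 2)"
    by auto
qed auto

lemma sum_pow_le:
  fixes f :: "'a \<Rightarrow> real"
  assumes "finite I" "\<And>i. i \<in> I \<Longrightarrow> f i \<ge> 0" "t \<ge> 1"
  shows "(\<Sum>i\<in>I. f i) ^ t \<le> real (card I) ^ (t - 1) * (\<Sum>i\<in>I. f i ^ t)"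
proof (cases "I = {}")
  case True then show ?thesis using assms by (simp add: zero_power)
next
  case False
  define N where "N = real (card I)"
  have N: "N > 0" using False assms(1) N_def by (simp add: card_gt_0_iff)
  have "(\<Sum>i\<in>I. (1/N) *\<^sub>R f i) ^ t \<le> (\<Sum>i\<in>I. (1/N) * (f i) ^ t)"
    using convex_on_sum[OF assms(1) False convex_power_nonneg[of t], where a = "\<lambda>_. 1/N" and y = f]
    using assms N_def N False by simp
  hence "((\<Sum>i\<in>I. f i) / N) ^ t \<le> (\<Sum>i\<in>I. f i ^ t) / N"
    by (simp add: sum_divide_distrib[symmetric] sum_distrib_left[symmetric] divide_inverse mult.commute)
  hence "(\<Sum>i\<in>I. f i) ^ t / N ^ t \<le> (\<Sum>i\<in>I. f i ^ t) / N" by (simp add: power_divide)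
  hence "(\<Sum>i\<in>I. f i) ^ t \<le> (\<Sum>i\<in>I. f i ^ t) / N * N ^ t" using N by (simp add: divide_le_eq)
  also have "N ^ t = N * N ^ (t - 1)" using assms(3) by (metis Suc_diff_1 le_less_trans less_numeral_extra(1) power_Suc zero_less_one less_le_trans)
  finally show ?thesis using N N_def by (simp add: field_simps)
qed

lemma fact_choose_le: "fact t * real (m choose t) \<le> real m ^ t"
proof (cases "t \<le> m")
  case True
  have "fact t * fact (m - t) * (m choose t) = fact m" using binomial_fact_lemma[OF True] .
  hence "fact t * (m choose t) = fact m div fact (m - t)" by (metis fact_nonzero nonzero_mult_div_cancel_right mult.commute mult.assoc)
  hence "fact t * (m choose t) \<le> m ^ t" using fact_div_fact_le_pow[OF True] by simp
  hence "real (fact t * (m choose t)) \<le> real (m ^ t)" by linarith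
  thus ?thesis by simp
qed (simp add: binomial_eq_0)

lemma choose_lower: "d \<ge> t \<Longrightarrow> real (d - t + 1) ^ t \<le> fact t * real (d choose t)"
proof (induction t arbitrary: d)
  case 0 then show ?case by simp
next
  case (Suc t)
  then obtain d' where d: "d = Suc d'" "d' \<ge> t" by (cases d) auto
  have IH: "real (d' - t + 1) ^ t \<le> fact t * real (d' choose t)" using Suc.IH d by simp
  have key: "real (Suc t) * real (Suc d' choose Suc t) = real (Suc d') * real (d' choose t)"
    using Suc_times_binomial[of t d'] by (metis of_nat_mult)
  have "real (d - Suc t + 1) ^ Suc t = real (d' - t + 1) * real (d' - t + 1) ^ t" using d by simp
  also have "\<dots> \<le> real (Suc d') * (fact t * real (d' choose t))"
    using IH d by (intro mult_mono) auto
  also have "\<dots> = fact t * (real (Suc t) * real (Suc d' choose Suc t))" using key by simp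
  also have "\<dots> = fact (Suc t) * real (d choose Suc t)" using d by (simp add: algebra_simps)
  finally show ?case .
qed


lemma pow_powr_inv: assumes "a \<ge> 0" "t \<ge> 1" shows "(a ^ t) powr (1 / real t) = (a::real)"
proof (cases "a = 0")
  case True then show ?thesis using assms by (simp add: zero_power)
next
  case False
  then have "a > 0" using assms by simp
  then show ?thesis using assms by (simp add: powr_realpow[symmetric] powr_powr)
qed

lemma AL:
  fixes d :: "'a \<Rightarrow> nat" and E :: real
  assumes I: "finite I" and t: "t \<ge> 1" and E: "E \<ge> 0"
    and C: "(\<Sum>T\<in>I. real (d T choose t)) \<le> real (m choose t) * E"
  shows "real (\<Sum>T\<in>I. d T) \<le> (real t - 1) * real (card I)
          + real (card I) powr (1 - 1/real t) * real m * E powr (1/real t)"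
proof (cases "I = {}")
  case True then show ?thesis by simp
next
  case False
  define x where "x T = max 0 (real (d T) - (real t - 1))" for T
  have x0: "x T \<ge> 0" for T unfolding x_def by simp
  have xt: "x T ^ t \<le> fact t * real (d T choose t)" for T
  proof (cases "d T \<ge> t")
    case True
    then have "x T = real (d T - t + 1)" unfolding x_def using t by (simp add: of_nat_diff)
    then show ?thesis using choose_lower[OF True] by simp
  next
    case False
    then have "x T = 0" unfolding x_def by simp
    then show ?thesis using t by (simp add: zero_power)
  qed
  have "(\<Sum>T\<in>I. x T ^ t) \<le> (\<Sum>T\<in>I. fact t * real (d T choose t))"
    by (rule sum_mono) (rule xt)
  also have "\<dots> = fact t * (\<Sum>T\<in>I. real (d T choose t))" by (simp add: sum_distrib_left)
  also have "\<dots> \<le> fact t * (real (m choose t) * E)" using C by (intro mult_left_mono) auto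
  also have "\<dots> \<le> real m ^ t * E" using fact_choose_le[of t m] E
    by (metis mult.assoc mult_right_mono)
  finally have S: "(\<Sum>T\<in>I. x T ^ t) \<le> real m ^ t * E" .
  define N where "N = real (card I)"
  have N0: "N \<ge> 0" unfolding N_def by simp
  have Npos: "N > 0" unfolding N_def using False I by (simp add: card_gt_0_iff)
  have "(\<Sum>T\<in>I. x T) ^ t \<le> N ^ (t - 1) * (\<Sum>T\<in>I. x T ^ t)"
    unfolding N_def by (rule sum_pow_le[OF I x0 t])
  also have "\<dots> \<le> N ^ (t - 1) * (real m ^ t * E)" using S N0 by (intro mult_left_mono) auto
  finally have P: "(\<Sum>T\<in>I. x T) ^ t \<le> N ^ (t - 1) * real m ^ t * E" by simp
  have sx0: "(\<Sum>T\<in>I. x T) \<ge> 0" using x0 by (simp add: sum_nonneg)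
  have "(\<Sum>T\<in>I. x T) = ((\<Sum>T\<in>I. x T) ^ t) powr (1 / real t)" using pow_powr_inv[OF sx0 t] by simp
  also have "\<dots> \<le> (N ^ (t - 1) * real m ^ t * E) powr (1 / real t)"
    using P sx0 by (intro powr_mono2) auto
  also have "\<dots> = (N ^ (t - 1)) powr (1 / real t) * (real m ^ t) powr (1 / real t) * E powr (1 / real t)"
    using N0 E by (simp add: powr_mult)
  also have "(N ^ (t - 1)) powr (1 / real t) = N powr (1 - 1 / real t)"
  proof -
    show ?thesis using t Npos by (simp add: powr_realpow[symmetric] powr_powr of_nat_diff field_simps)
  qed
  also have "(real m ^ t) powr (1 / real t) = real m" by (rule pow_powr_inv) (use t in auto)
  finally have X: "(\<Sum>T\<in>I. x T) \<le> N powr (1 - 1 / real t) * real m * E powr (1 / real t)" .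
  have "real (\<Sum>T\<in>I. d T) = (\<Sum>T\<in>I. real (d T))" by simp
  also have "\<dots> \<le> (\<Sum>T\<in>I. (real t - 1) + x T)"
    by (rule sum_mono) (simp add: x_def)
  also have "\<dots> = (real t - 1) * N + (\<Sum>T\<in>I. x T)" by (simp add: sum.distrib N_def)
  finally show ?thesis using X N_def by simp
qed


lemma card_filter_sum: "finite A \<Longrightarrow> card {x\<in>A. P x} = (\<Sum>x\<in>A. if P x then 1 else (0::nat))"
  by (simp add: sum.If_cases Int_def)

lemma SL:
  fixes R :: "'v \<Rightarrow> 'a \<Rightarrow> bool" and E :: real
  assumes V1: "finite V1" and I: "finite I" and t: "t \<ge> 1" and E: "E \<ge> 0"
    and L: "\<And>S. S \<subseteq> V1 \<Longrightarrow> card S = t \<Longrightarrow> real (card {T\<in>I. \<forall>v\<in>S. R v T}) \<le> E"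
  shows "real (\<Sum>T\<in>I. card {v\<in>V1. R v T}) \<le> (real t - 1) * real (card I)
          + real (card I) powr (1 - 1/real t) * real (card V1) * E powr (1/real t)"
proof -
  define SS where "SS = {S. S \<subseteq> V1 \<and> card S = t}"
  have SSf: "finite SS" unfolding SS_def using V1 by simp
  have cSS: "card SS = card V1 choose t" unfolding SS_def using n_subsets[OF V1] .
  have eq1: "card {v\<in>V1. R v T} choose t = card {S\<in>SS. \<forall>v\<in>S. R v T}" if "T \<in> I" for T
  proof -
    have "card {v\<in>V1. R v T} choose t = card {S. S \<subseteq> {v\<in>V1. R v T} \<and> card S = t}"
      using n_subsets[of "{v\<in>V1. R v T}" t] V1 by simp
    also have "{S. S \<subseteq> {v\<in>V1. R v T} \<and> card S = t} = {S\<in>SS. \<forall>v\<in>S. R v T}"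
      unfolding SS_def by auto
    finally show ?thesis .
  qed
  have "(\<Sum>T\<in>I. card {v\<in>V1. R v T} choose t) = (\<Sum>T\<in>I. card {S\<in>SS. \<forall>v\<in>S. R v T})"
    using eq1 by (rule sum.cong[OF refl])
  also have "\<dots> = (\<Sum>T\<in>I. \<Sum>S\<in>SS. if (\<forall>v\<in>S. R v T) then 1 else 0)"
    using SSf by (simp add: card_filter_sum)
  also have "\<dots> = (\<Sum>S\<in>SS. \<Sum>T\<in>I. if (\<forall>v\<in>S. R v T) then 1 else 0)"
    by (rule sum.swap)
  also have "\<dots> = (\<Sum>S\<in>SS. card {T\<in>I. \<forall>v\<in>S. R v T})"
    using I by (simp add: card_filter_sum)
  finally have eq2: "(\<Sum>T\<in>I. card {v\<in>V1. R v T} choose t) = (\<Sum>S\<in>SS. card {T\<in>I. \<forall>v\<in>S. R v T})" .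
  have "(\<Sum>T\<in>I. real (card {v\<in>V1. R v T} choose t)) = real (\<Sum>T\<in>I. card {v\<in>V1. R v T} choose t)"
    by simp
  also have "\<dots> = (\<Sum>S\<in>SS. real (card {T\<in>I. \<forall>v\<in>S. R v T}))" using eq2 by simp
  also have "\<dots> \<le> (\<Sum>S\<in>SS. E)" by (rule sum_mono) (use L in \<open>auto simp: SS_def\<close>)
  also have "\<dots> = real (card V1 choose t) * E" using cSS by simp
  finally have C: "(\<Sum>T\<in>I. real (card {v\<in>V1. R v T} choose t)) \<le> real (card V1 choose t) * E" .
  show ?thesis using AL[OF I t E C] .
qed


definition kcopy :: "nat \<Rightarrow> (nat \<Rightarrow> nat) \<Rightarrow> 'v set set \<Rightarrow> bool" where
  "kcopy k t G \<longleftrightarrow> (\<exists>W::nat \<Rightarrow> 'v set. (\<forall>i\<in>{1..k}. finite (W i) \<and> card (W i) = t i) \<and>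
     (\<forall>i\<in>{1..k}. \<forall>j\<in>{1..k}. i \<noteq> j \<longrightarrow> W i \<inter> W j = {}) \<and>
     (\<forall>f. (\<forall>i\<in>{1..k}. f i \<in> W i) \<longrightarrow> f ` {1..k} \<in> G))"

lemma lift:
  assumes tpos: "\<forall>j\<in>{1..k}. t' j \<ge> 1"
    and cp: "kcopy k t' L" and S: "finite S" "card S = a"
    and Ldisj: "\<forall>T\<in>L. T \<inter> S = {}" and Lins: "\<forall>T\<in>L. \<forall>v\<in>S. insert v T \<in> G"
  shows "\<exists>W. (\<forall>i\<in>{1..Suc k}. finite (W i) \<and> card (W i) = (if i = 1 then a else t' (i - 1))) \<and> W 1 = S
     \<and> (\<forall>i\<in>{2..Suc k}. W i \<subseteq> \<Union>L) \<and> (\<forall>i\<in>{1..Suc k}. \<forall>j\<in>{1..Suc k}. i \<noteq> j \<longrightarrow> W i \<inter> W j = {})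
     \<and> (\<forall>f. (\<forall>i\<in>{1..Suc k}. f i \<in> W i) \<longrightarrow> f ` {1..Suc k} \<in> G)"
proof -
  obtain W' :: "nat \<Rightarrow> _" where W'1: "\<forall>i\<in>{1..k}. finite (W' i) \<and> card (W' i) = t' i"
    and W'2: "\<forall>i\<in>{1..k}. \<forall>j\<in>{1..k}. i \<noteq> j \<longrightarrow> W' i \<inter> W' j = {}"
    and W'3: "\<forall>f. (\<forall>i\<in>{1..k}. f i \<in> W' i) \<longrightarrow> f ` {1..k} \<in> L"
    using cp unfolding kcopy_def by blast
  have ne: "\<exists>x. x \<in> W' i" if "i \<in> {1..k}" for i
  proof -
    have "card (W' i) \<ge> 1" using W'1 tpos that by auto
    then have "W' i \<noteq> {}" by auto
    then show ?thesis by auto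
  qed
  have sub: "W' j \<subseteq> \<Union>L" if j: "j \<in> {1..k}" for j
  proof
    fix w assume w: "w \<in> W' j"
    define f where "f i = (if i = j then w else SOME x. x \<in> W' i)" for i
    have "\<forall>i\<in>{1..k}. f i \<in> W' i"
      unfolding f_def using w ne by (auto intro: someI_ex)
    then have "f ` {1..k} \<in> L" using W'3 by blast
    moreover have "w \<in> f ` {1..k}" using j unfolding f_def by force
    ultimately show "w \<in> \<Union>L" by blast
  qed
  define W where "W i = (if i = 1 then S else W' (i - 1))" for i
  have c1: "\<forall>i\<in>{1..Suc k}. finite (W i) \<and> card (W i) = (if i = 1 then a else t' (i - 1))"
  proof
    fix i assume i: "i \<in> {1..Suc k}"
    show "finite (W i) \<and> card (W i) = (if i = 1 then a else t' (i - 1))"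
    proof (cases "i = 1")
      case True then show ?thesis using S unfolding W_def by simp
    next
      case False
      then have "i - 1 \<in> {1..k}" using i by auto
      then show ?thesis using W'1 False unfolding W_def by simp
    qed
  qed
  have c2: "\<forall>i\<in>{2..Suc k}. W i \<subseteq> \<Union>L"
  proof
    fix i assume i: "i \<in> {2..Suc k}"
    then have "i - 1 \<in> {1..k}" by auto
    then show "W i \<subseteq> \<Union>L" using sub i unfolding W_def by auto
  qed
  have dS: "S \<inter> W' j = {}" if "j \<in> {1..k}" for j
    using sub[OF that] Ldisj by blast
  have c3: "\<forall>i\<in>{1..Suc k}. \<forall>j\<in>{1..Suc k}. i \<noteq> j \<longrightarrow> W i \<inter> W j = {}"
  proof (intro ballI impI)
    fix i j assume i: "i \<in> {1..Suc k}" and j: "j \<in> {1..Suc k}" and ij: "i \<noteq> j"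
    show "W i \<inter> W j = {}"
    proof (cases "i = 1")
      case True
      have "j - 1 \<in> {1..k}" using ij j True by auto
      then show ?thesis using dS[of "j - 1"] ij True unfolding W_def by auto
    next
      case False
      note iF = False
      show ?thesis
      proof (cases "j = 1")
        case True
        have "i - 1 \<in> {1..k}" using ij i True by auto
        then show ?thesis using dS[of "i - 1"] ij iF True unfolding W_def by auto
      next
        case False
        have "i - 1 \<in> {1..k}" "j - 1 \<in> {1..k}" "i - 1 \<noteq> j - 1" using ij i j iF False by auto
        then show ?thesis using W'2 iF False unfolding W_def by auto
      qed
    qed
  qed
  have c4: "\<forall>f. (\<forall>i\<in>{1..Suc k}. f i \<in> W i) \<longrightarrow> f ` {1..Suc k} \<in> G"
  proof (intro allI impI)
    fix f assume f: "\<forall>i\<in>{1..Suc k}. f i \<in> W i"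
    define g where "g j = f (Suc j)" for j
    have "\<forall>j\<in>{1..k}. g j \<in> W' j"
    proof
      fix j assume j: "j \<in> {1..k}"
      then have "Suc j \<in> {1..Suc k}" by auto
      then have "f (Suc j) \<in> W (Suc j)" using f by blast
      then show "g j \<in> W' j" unfolding g_def W_def using j by simp
    qed
    then have gL: "g ` {1..k} \<in> L" using W'3 by blast
    have f1: "f 1 \<in> S" using f[rule_format, of 1] unfolding W_def by simp
    have "{1..Suc k} = insert 1 (Suc ` {1..k})" by (auto simp: image_iff)
    then have "f ` {1..Suc k} = insert (f 1) (g ` {1..k})" unfolding g_def by (simp only: image_insert image_image)
    then show "f ` {1..Suc k} \<in> G" using Lins gL f1 by auto
  qed
  have "W 1 = S" unfolding W_def by simp
  then show ?thesis using c1 c2 c3 c4 by (intro exI[of _ W]) simp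
qed

lemma dc_k:
  assumes V: "finite V" and G: "G \<subseteq> {e. e \<subseteq> V \<and> card e = Suc k}"
  shows "(\<Sum>T\<in>{T. T \<subseteq> V \<and> card T = k}. card {v\<in>V. v \<notin> T \<and> insert v T \<in> G}) = Suc k * card G"
proof -
  let ?I = "{T. T \<subseteq> V \<and> card T = k}"
  let ?B = "\<lambda>T. {v\<in>V. v \<notin> T \<and> insert v T \<in> G}"
  have If: "finite ?I" using V by simp
  have Gf: "finite G" proof (rule finite_subset)
    show "G \<subseteq> Pow V" using G by auto
  qed (use V in simp)
  have ef: "\<forall>e\<in>G. finite e" using G V finite_subset by blast
  have "(\<Sum>T\<in>?I. card (?B T)) = card (Sigma ?I ?B)" using If V by (simp add: card_SigmaI)
  also have "\<dots> = card (Sigma G (\<lambda>e. e))"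
  proof (rule bij_betw_same_card[of "\<lambda>(T, v). (insert v T, v)"])
    show "bij_betw (\<lambda>(T, v). (insert v T, v)) (Sigma ?I ?B) (Sigma G (\<lambda>e. e))"
    proof (rule bij_betw_imageI)
      show "inj_on (\<lambda>(T, v). (insert v T, v)) (Sigma ?I ?B)"
      proof (rule inj_onI, clarsimp)
        fix T v T' assume "v \<notin> T" "v \<notin> T'" "insert v T = insert v T'"
        then show "T = T'" by (metis Diff_insert_absorb)
      qed
      show "(\<lambda>(T, v). (insert v T, v)) ` Sigma ?I ?B = Sigma G (\<lambda>e. e)"
      proof
        show "(\<lambda>(T, v). (insert v T, v)) ` Sigma ?I ?B \<subseteq> Sigma G (\<lambda>e. e)" by auto
        show "Sigma G (\<lambda>e. e) \<subseteq> (\<lambda>(T, v). (insert v T, v)) ` Sigma ?I ?B"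
        proof clarify
          fix e v assume e: "e \<in> G" and v: "v \<in> e"
          have fe: "finite e" using ef e by blast
          have "card (e - {v}) = k" using G e v fe by auto
          moreover have "e - {v} \<subseteq> V" "v \<in> V" using G e v by auto
          moreover have "insert v (e - {v}) = e" using v by auto
          ultimately have "(e - {v}, v) \<in> Sigma ?I ?B" using e by auto
          moreover have "(e, v) = (\<lambda>(T, v). (insert v T, v)) (e - {v}, v)" using v by auto
          ultimately show "(e, v) \<in> (\<lambda>(T, v). (insert v T, v)) ` Sigma ?I ?B" by blast
        qed
      qed
    qed
  qed
  also have "\<dots> = (\<Sum>e\<in>G. card e)" using Gf ef by (simp add: card_SigmaI)
  also have "\<dots> = (\<Sum>e\<in>G. Suc k)" using G by (intro sum.cong) auto
  also have "\<dots> = Suc k * card G" by simp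
  finally show ?thesis .
qed

lemma arith_step:
  fixes n N A' P' :: real and a k :: nat
  assumes n: "n \<ge> 1" and a: "a \<ge> 1" and k: "k \<ge> 1" and P': "P' \<ge> 1" and N0: "0 \<le> N" and Nn: "N \<le> n ^ k"
    and A: "A' = 0 \<or> A' \<ge> 1"
  shows "(real a - 1) * N + N powr (1 - 1/real a) * n * (A'/real k * n powr (real k - 1/P')) powr (1/real a)
    \<le> (real a - 1 + A') * n powr (real k + 1 - 1/(real a * P'))"
proof -
  define ex where "ex = real k + 1 - 1/(real a * P')"
  have aP: "real a * P' \<ge> 1" using a P' by (metis mult_mono' of_nat_1 of_nat_le_iff mult_1_left zero_le_one)
  have exk: "real k \<le> ex" unfolding ex_def using aP by (simp add: divide_le_eq)
  have A0: "A' \<ge> 0" using A by auto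
  have t1: "(real a - 1) * N \<le> (real a - 1) * n powr ex"
  proof -
    have "N \<le> n powr real k" using Nn n by (simp add: powr_realpow)
    also have "\<dots> \<le> n powr ex" using exk n by (intro powr_mono) auto
    finally show ?thesis using a by (intro mult_left_mono) auto
  qed
  have t2a: "N powr (1 - 1/real a) \<le> n powr (real k * (1 - 1/real a))"
  proof -
    have "N powr (1 - 1/real a) \<le> (n ^ k) powr (1 - 1/real a)"
      using N0 Nn a by (intro powr_mono2) (auto simp: field_simps)
    also have "\<dots> = n powr (real k * (1 - 1/real a))" using n by (simp add: powr_realpow[symmetric] powr_powr)
    finally show ?thesis .
  qed
  have t2b: "(A'/real k * n powr (real k - 1/P')) powr (1/real a)
      = (A'/real k) powr (1/real a) * n powr ((real k - 1/P') / real a)"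
  proof -
    have "(A'/real k * n powr (real k - 1/P')) powr (1/real a) = (A'/real k) powr (1/real a) * (n powr (real k - 1/P')) powr (1/real a)"
      using A0 n by (intro powr_mult)
    also have "(n powr (real k - 1/P')) powr (1/real a) = n powr ((real k - 1/P') / real a)" by (simp add: powr_powr)
    finally show ?thesis .
  qed
  have cA: "(A'/real k) powr (1/real a) \<le> A'"
  proof (cases "A' = 0")
    case True then show ?thesis by simp
  next
    case False
    then have A1: "A' \<ge> 1" using A by auto
    have "(A'/real k) powr (1/real a) \<le> A' powr (1/real a)"
      using A1 k by (intro powr_mono2) (auto simp: field_simps)
    also have "\<dots> \<le> A' powr 1" using A1 a by (intro powr_mono) auto
    finally show ?thesis using A1 by simp
  qed
  have expo: "real k * (1 - 1/real a) + 1 + (real k - 1/P') / real a = ex"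
    unfolding ex_def using a P' by (simp add: field_simps)
  have "N powr (1 - 1/real a) * n * (A'/real k * n powr (real k - 1/P')) powr (1/real a)
      = N powr (1 - 1/real a) * n * ((A'/real k) powr (1/real a) * n powr ((real k - 1/P') / real a))"
    using t2b by simp
  also have "\<dots> \<le> n powr (real k * (1 - 1/real a)) * n * (A' * n powr ((real k - 1/P') / real a))"
    using t2a cA n A0 by (intro mult_mono) auto
  also have "\<dots> = A' * (n powr (real k * (1 - 1/real a)) * n powr 1 * n powr ((real k - 1/P') / real a))"
    using n by simp
  also have "\<dots> = A' * n powr ex"
  proof -
    have "n powr (real k * (1 - 1/real a)) * n powr 1 * n powr ((real k - 1/P') / real a)
        = n powr (real k * (1 - 1/real a) + 1 + (real k - 1/P') / real a)" by (simp only: powr_add)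
    then show ?thesis using expo by simp
  qed
  finally have t2: "N powr (1 - 1/real a) * n * (A'/real k * n powr (real k - 1/P')) powr (1/real a) \<le> A' * n powr ex" .
  show ?thesis using t1 t2 unfolding ex_def[symmetric] by (simp add: algebra_simps)
qed

lemma sum_shift1: "(\<Sum>i=1..Suc k. t i) = t 1 + (\<Sum>i=1..k. t (Suc i))"
proof -
  have "(\<Sum>i=1..Suc k. t i) = t 1 + (\<Sum>i=Suc 1..Suc k. t i)" by (rule sum.atLeast_Suc_atMost) simp
  then show ?thesis by (simp only: sum.shift_bounds_cl_Suc_ivl)
qed

lemma prod_shift1: "k \<ge> 1 \<Longrightarrow> (\<Prod>i=1..k. t i) = t 1 * (\<Prod>i=1..k-1. t (Suc i))"
proof -
  assume k: "k \<ge> 1"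
  have "(\<Prod>i=1..k. t i) = t 1 * (\<Prod>i=Suc 1..k. t i)" using k by (simp add: prod.atLeast_Suc_atMost)
  also have "{Suc 1..k} = {Suc 1..Suc (k-1)}" using k by simp
  finally show ?thesis by (simp only: prod.shift_bounds_cl_Suc_ivl)
qed

lemma lemA:
  assumes "k > 0" "finite V" "card V \<ge> 1" "\<forall>i\<in>{1..k}. t i \<ge> 1"
    "G \<subseteq> {e. e \<subseteq> V \<and> card e = k}" "\<not> kcopy k t G"
  shows "real (card G) \<le> (real (\<Sum>i=1..k. t i) - real k) / real k
     * real (card V) powr (real k - 1 / real (\<Prod>i=1..k-1. t i))"
  using assms
proof (induction k arbitrary: t G rule: nat_induct_non_zero)
  case 1
  have "card G < t 1"
  proof (rule ccontr)
    assume "\<not> card G < t 1"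
    then have ge: "card G \<ge> t 1" by simp
    define U where "U = {v. {v} \<in> G}"
    have GU: "G = (\<lambda>v. {v}) ` U"
    proof
      show "G \<subseteq> (\<lambda>v. {v}) ` U"
      proof
        fix e assume e: "e \<in> G"
        then have "card e = 1" using 1 by auto
        then obtain v where "e = {v}" by (rule card_1_singletonE)
        then show "e \<in> (\<lambda>v. {v}) ` U" using e U_def by auto
      qed
      show "(\<lambda>v. {v}) ` U \<subseteq> G" unfolding U_def by auto
    qed
    have Uf: "finite U"
    proof (rule finite_subset)
      show "U \<subseteq> V" unfolding U_def using 1 by auto
    qed (use 1 in simp)
    have "card G = card U" unfolding GU by (rule card_image) (auto simp: inj_on_def)
    then obtain W1 where W1: "W1 \<subseteq> U" "card W1 = t 1" using ge by (metis obtain_subset_with_card_n)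
    have "kcopy 1 t G"
      unfolding kcopy_def
    proof (intro exI[of _ "\<lambda>_. W1"] conjI)
      show "\<forall>i\<in>{1..1}. finite W1 \<and> card W1 = t i" using W1 Uf finite_subset by auto
      show "\<forall>i\<in>{1..1::nat}. \<forall>j\<in>{1..1::nat}. i \<noteq> j \<longrightarrow> W1 \<inter> W1 = {}" by (metis atLeastAtMost_iff le_antisym)
      show "\<forall>f. (\<forall>i\<in>{1..1::nat}. f i \<in> W1) \<longrightarrow> f ` {1..1::nat} \<in> G"
        using W1 U_def by auto
    qed
    then show False using 1 by simp
  qed
  then have "real (card G) \<le> real (t 1) - 1" by linarith
  moreover have "real (card V) powr (real 1 - 1 / real (\<Prod>i=1..1-1. t i)) = 1" using 1 by (auto simp: card_gt_0_iff)
  ultimately show ?case by simp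
next
  case (Suc k)
  define t' where "t' j = t (Suc j)" for j
  define n where "n = card V"
  define I where "I = {T. T \<subseteq> V \<and> card T = k}"
  have t'pos: "\<forall>i\<in>{1..k}. t' i \<ge> 1" using Suc.prems unfolding t'_def by auto
  have t1: "t 1 \<ge> 1" using Suc.prems by auto
  have sumk: "(\<Sum>i=1..k. t' i) \<ge> k"
  proof -
    have "(\<Sum>i=1..k. (1::nat)) \<le> (\<Sum>i=1..k. t' i)" using t'pos by (intro sum_mono) auto
    then show ?thesis by simp
  qed
  define A' where "A' = real (\<Sum>i=1..k. t' i) - real k"
  have A'nat: "A' = real ((\<Sum>i=1..k. t' i) - k)" unfolding A'_def using sumk by (simp add: of_nat_diff)
  have A: "A' = 0 \<or> A' \<ge> 1" unfolding A'nat by (cases "(\<Sum>i=1..k. t' i) - k") auto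
  define E where "E = A' / real k * real n powr (real k - 1 / real (\<Prod>i=1..k-1. t' i))"
  have E0: "E \<ge> 0" unfolding E_def using A by (intro mult_nonneg_nonneg divide_nonneg_nonneg) auto
  have L: "real (card {T\<in>I. \<forall>v\<in>S. v \<notin> T \<and> insert v T \<in> G}) \<le> E"
    if S: "S \<subseteq> V" "card S = t 1" for S
  proof -
    let ?L = "{T\<in>I. \<forall>v\<in>S. v \<notin> T \<and> insert v T \<in> G}"
    have Lsub: "?L \<subseteq> {e. e \<subseteq> V \<and> card e = k}" unfolding I_def by auto
    have nc: "\<not> kcopy k t' ?L"
    proof
      assume cp: "kcopy k t' ?L"
      have Sf: "finite S" using S(1) Suc.prems(1) by (rule finite_subset)
      have Ld: "\<forall>T\<in>?L. T \<inter> S = {}" by blast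
      have Li: "\<forall>T\<in>?L. \<forall>v\<in>S. insert v T \<in> G" by blast
      obtain W where W1: "\<forall>i\<in>{1..Suc k}. finite (W i) \<and> card (W i) = (if i = 1 then t 1 else t' (i - 1))"
        and W3: "\<forall>i\<in>{1..Suc k}. \<forall>j\<in>{1..Suc k}. i \<noteq> j \<longrightarrow> W i \<inter> W j = {}"
        and W4: "\<forall>f. (\<forall>i\<in>{1..Suc k}. f i \<in> W i) \<longrightarrow> f ` {1..Suc k} \<in> G"
        using lift[OF t'pos cp Sf S(2) Ld Li] by blast
      have "\<forall>i\<in>{1..Suc k}. finite (W i) \<and> card (W i) = t i"
      proof
        fix i assume i: "i \<in> {1..Suc k}"
        show "finite (W i) \<and> card (W i) = t i"
        proof (cases "i = 1")
          case True then show ?thesis using W1 i by simp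
        next
          case False
          then have "Suc (i - 1) = i" using i by auto
          then show ?thesis using W1 i False unfolding t'_def by simp
        qed
      qed
      then have "kcopy (Suc k) t G" unfolding kcopy_def using W3 W4 by blast
      then show False using Suc.prems by simp
    qed
    have "real (card ?L) \<le> (real (\<Sum>i=1..k. t' i) - real k) / real k
       * real (card V) powr (real k - 1 / real (\<Prod>i=1..k-1. t' i))"
      using Suc.IH[OF Suc.prems(1) Suc.prems(2) t'pos Lsub nc] .
    then show ?thesis unfolding E_def n_def A'_def .
  qed
  have SLr: "real (\<Sum>T\<in>I. card {v\<in>V. v \<notin> T \<and> insert v T \<in> G}) \<le> (real (t 1) - 1) * real (card I)
          + real (card I) powr (1 - 1/real (t 1)) * real (card V) * E powr (1/real (t 1))"
    by (rule SL[OF Suc.prems(1) _ t1 E0]) (use L I_def Suc.prems(1) in auto)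
  have dc: "(\<Sum>T\<in>I. card {v\<in>V. v \<notin> T \<and> insert v T \<in> G}) = Suc k * card G"
    unfolding I_def by (rule dc_k[OF Suc.prems(1)]) (use Suc.prems in simp)
  have cI: "card I = n choose k" unfolding I_def n_def using n_subsets[OF Suc.prems(1)] .
  have NI: "real (card I) \<le> real n ^ k"
  proof (cases "k \<le> n")
    case True then show ?thesis using cI binomial_le_pow[OF True] by (metis of_nat_le_iff of_nat_power)
  next
    case False then show ?thesis using cI by (simp add: binomial_eq_0)
  qed
  have P': "real (\<Prod>i=1..k-1. t' i) \<ge> 1"
  proof -
    have "(\<Prod>i=1..k-1. t' i) \<ge> 1" using t'pos by (intro prod_ge_1) auto
    then show ?thesis by (metis of_nat_1 of_nat_le_iff)
  qed
  note ar = arith_step[of "real n" "t 1" k "real (\<Prod>i=1..k-1. t' i)" "real (card I)" A', OF _ t1 _ P' _ NI A]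
  have ar2: "(real (t 1) - 1) * real (card I) + real (card I) powr (1 - 1/real (t 1)) * real n
      * E powr (1/real (t 1))
    \<le> (real (t 1) - 1 + A') * real n powr (real k + 1 - 1/(real (t 1) * real (\<Prod>i=1..k-1. t' i)))"
    using ar Suc.prems(2) Suc.hyps unfolding E_def A'_def n_def by simp
  have eqG: "real (\<Sum>T\<in>I. card {v\<in>V. v \<notin> T \<and> insert v T \<in> G}) = real (Suc k) * real (card G)"
    using dc by (metis of_nat_mult)
  define C where "C = real (t 1) - 1 + A'"
  define e where "e = real k + 1 - 1/(real (t 1) * real (\<Prod>i=1..k-1. t' i))"
  have X: "real (Suc k) * real (card G) \<le> C * real (card V) powr e"
    using SLr ar2 eqG unfolding n_def C_def e_def by linarith
  have c1: "real (\<Sum>i=1..Suc k. t i) - real (Suc k) = C"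
  proof -
    have "real (\<Sum>i=1..Suc k. t i) = real (t 1) + real (\<Sum>i=1..k. t (Suc i))"
      by (simp only: sum_shift1 of_nat_add)
    then show ?thesis unfolding C_def A'_def t'_def by simp
  qed
  have c2: "real (\<Prod>i=1..Suc k - 1. t i) = real (t 1) * real (\<Prod>i=1..k-1. t' i)"
    unfolding t'_def using prod_shift1[of k t] Suc.hyps by simp
  have c3: "real (Suc k) - 1 / real (\<Prod>i=1..Suc k - 1. t i) = e"
    unfolding e_def c2 by simp
  have "real (card G) \<le> C * real (card V) powr e / real (Suc k)"
    using X by (simp add: pos_le_divide_eq mult.commute)
  then show ?case unfolding c1 c3 by simp
qed

lemma arith_main:
  fixes n N A P' m :: real and a k :: nat
  assumes n: "n \<ge> 1" and a: "a \<ge> 1" and k: "k \<ge> 1" and P': "P' \<ge> 1" and N0: "0 \<le> N"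
    and Nn: "N \<le> n ^ k / real k" and A0: "A \<ge> 0" and m: "m \<ge> 0"
  shows "N powr (1 - 1/real a) * m * (A/real k * n powr (real k - 1/P')) powr (1/real a)
    \<le> A powr (1/real a) / real k * m * n powr (real k - 1/(real a * P'))"
proof -
  have kpos: "real k > 0" using k by simp
  have t2a: "N powr (1 - 1/real a) \<le> n powr (real k * (1 - 1/real a)) * real k powr (- (1 - 1/real a))"
  proof -
    have "N powr (1 - 1/real a) \<le> (n ^ k / real k) powr (1 - 1/real a)"
      using N0 Nn a by (intro powr_mono2) (auto simp: field_simps)
    also have "\<dots> = (n ^ k) powr (1 - 1/real a) / real k powr (1 - 1/real a)"
      using n kpos by (intro powr_divide)
    also have "(n ^ k) powr (1 - 1/real a) = n powr (real k * (1 - 1/real a))"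
      using n by (simp add: powr_realpow[symmetric] powr_powr)
    also have "n powr (real k * (1 - 1/real a)) / real k powr (1 - 1/real a)
        = n powr (real k * (1 - 1/real a)) * real k powr (- (1 - 1/real a))"
      by (simp only: powr_minus_divide) simp
    finally show ?thesis .
  qed
  have t2b: "(A/real k * n powr (real k - 1/P')) powr (1/real a)
      = A powr (1/real a) * real k powr (- (1/real a)) * n powr ((real k - 1/P') / real a)"
  proof -
    have "(A/real k * n powr (real k - 1/P')) powr (1/real a) = (A/real k) powr (1/real a) * (n powr (real k - 1/P')) powr (1/real a)"
      using A0 n kpos by (intro powr_mult)
    also have "(n powr (real k - 1/P')) powr (1/real a) = n powr ((real k - 1/P') / real a)" by (simp add: powr_powr)
    also have "(A/real k) powr (1/real a) = A powr (1/real a) / real k powr (1/real a)"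
      using A0 kpos by (intro powr_divide)
    finally show ?thesis by (simp only: powr_minus_divide) simp
  qed
  have kk: "real k powr (- (1 - 1/real a)) * real k powr (- (1/real a)) = 1 / real k"
  proof -
    have "real k powr (- (1 - 1/real a)) * real k powr (- (1/real a)) = real k powr (- (1 - 1/real a) + - (1/real a))"
      by (simp only: powr_add)
    also have "\<dots> = real k powr (-1)" by simp
    finally show ?thesis using kpos by (simp only: powr_minus_divide) simp
  qed
  have nn: "n powr (real k * (1 - 1/real a)) * n powr ((real k - 1/P') / real a) = n powr (real k - 1/(real a * P'))"
  proof -
    have "n powr (real k * (1 - 1/real a)) * n powr ((real k - 1/P') / real a) = n powr (real k * (1 - 1/real a) + (real k - 1/P') / real a)"
      by (simp only: powr_add)
    also have "real k * (1 - 1/real a) + (real k - 1/P') / real a = real k - 1/(real a * P')"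
      using a P' by (simp add: field_simps)
    finally show ?thesis .
  qed
  have "N powr (1 - 1/real a) * m * (A/real k * n powr (real k - 1/P')) powr (1/real a)
      \<le> (n powr (real k * (1 - 1/real a)) * real k powr (- (1 - 1/real a))) * m * (A powr (1/real a) * real k powr (- (1/real a)) * n powr ((real k - 1/P') / real a))"
    unfolding t2b using t2a m by (intro mult_right_mono) auto
  also have "\<dots> = A powr (1/real a) * (real k powr (- (1 - 1/real a)) * real k powr (- (1/real a))) * m * (n powr (real k * (1 - 1/real a)) * n powr ((real k - 1/P') / real a))"
    by (simp add: algebra_simps)
  also have "\<dots> = A powr (1/real a) / real k * m * n powr (real k - 1/(real a * P'))"
    unfolding kk nn by simp
  finally show ?thesis .
qed

lemma dc_main:
  assumes sb: "semibipartite V1 V2 r H" and V1: "finite V1" and V2: "finite V2"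
  shows "(\<Sum>T\<in>{T. T \<subseteq> V2 \<and> card T = r - 1}. card {v\<in>V1. insert v T \<in> H}) = card H"
proof -
  let ?I = "{T. T \<subseteq> V2 \<and> card T = r - 1}"
  let ?B = "\<lambda>T. {v\<in>V1. insert v T \<in> H}"
  have disj: "V1 \<inter> V2 = {}" and edges: "\<forall>e\<in>H. e \<subseteq> V1 \<union> V2 \<and> card e = r \<and> card (e \<inter> V1) = 1"
    using sb unfolding semibipartite_def by auto
  have If: "finite ?I" using V2 by simp
  have "(\<Sum>T\<in>?I. card (?B T)) = card (Sigma ?I ?B)" using If V1 by (simp add: card_SigmaI)
  also have "\<dots> = card H"
  proof (rule bij_betw_same_card[of "\<lambda>(T, v). insert v T"])
    show "bij_betw (\<lambda>(T, v). insert v T) (Sigma ?I ?B) H"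
    proof (rule bij_betw_imageI)
      show "inj_on (\<lambda>(T, v). insert v T) (Sigma ?I ?B)"
      proof (rule inj_onI, clarify)
        fix T v T' v'
        assume T: "T \<subseteq> V2" and v: "v \<in> V1" and T': "T' \<subseteq> V2" and v': "v' \<in> V1"
          and eq: "insert v T = insert v' T'"
        have "v = v'" using eq T T' v v' disj by blast
        moreover have "T = T'"
        proof -
          have "T = insert v T \<inter> V2" using T v disj by blast
          also have "\<dots> = insert v' T' \<inter> V2" using eq by simp
          also have "\<dots> = T'" using T' v' disj by blast
          finally show ?thesis .
        qed
        ultimately show "T = T' \<and> v = v'" by simp
      qed
      show "(\<lambda>(T, v). insert v T) ` Sigma ?I ?B = H"
      proof
        show "(\<lambda>(T, v). insert v T) ` Sigma ?I ?B \<subseteq> H" by auto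
        show "H \<subseteq> (\<lambda>(T, v). insert v T) ` Sigma ?I ?B"
        proof
          fix e assume e: "e \<in> H"
          have es: "e \<subseteq> V1 \<union> V2" and ce: "card e = r" and c1: "card (e \<inter> V1) = 1" using edges e by auto
          obtain v where ev: "e \<inter> V1 = {v}" using c1 by (rule card_1_singletonE)
          have fe: "finite e" using es V1 V2 finite_subset by blast
          have vin: "v \<in> e" "v \<in> V1" using ev by auto
          have T: "e - {v} \<subseteq> V2" using es ev by blast
          have cT: "card (e - {v}) = r - 1" using fe vin ce by simp
          have ins: "insert v (e - {v}) = e" using vin by auto
          have "(e - {v}, v) \<in> Sigma ?I ?B" using T cT ins vin e by auto
          moreover have "e = (\<lambda>(T, v). insert v T) (e - {v}, v)" using ins by simp
          ultimately show "e \<in> (\<lambda>(T, v). insert v T) ` Sigma ?I ?B" by blast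
        qed
      qed
    qed
  qed
  finally show ?thesis .
qed

lemma choose_le_div: "k \<ge> 1 \<Longrightarrow> real (n choose k) \<le> real n ^ k / real k"
proof -
  assume k: "k \<ge> 1"
  have fk: "real k \<le> fact k" by (metis fact_ge_self of_nat_fact of_nat_le_iff)
  have "real k * real (n choose k) \<le> fact k * real (n choose k)"
    using fk by (intro mult_right_mono) auto
  also have "\<dots> \<le> real n ^ k" by (rule fact_choose_le)
  finally show ?thesis using k by (simp add: field_simps)
qed

theorem proposition2p11:
  fixes r m n :: nat and s :: "nat \<Rightarrow> nat"
  assumes "r \<ge> 3" and "s 1 \<ge> 1"
    and "\<forall>i\<in>{1..<r}. s i \<le> s (Suc i)"
    and "m \<ge> 1" and "n \<ge> 1"
  shows "real (Z m n r s) \<le>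
     (real (\<Sum>i=2..r. s i) - real r + 1) powr (1 / real (s 1)) / (real r - 1)
       * real m * real n powr (real r - 1 - 1 / real (\<Prod>i=1..r-1. s i))
     + (real (s 1) - 1) * real (n choose (r - 1))"
proof -
  note r3 = assms(1) and s1 = assms(2) and mono = assms(3) and m1 = assms(4) and n1 = assms(5)
  define k where "k = r - 1"
  have rk: "r = Suc k" and k2: "k \<ge> 2" using r3 unfolding k_def by auto
  have sge: "1 \<le> i \<longrightarrow> i \<le> r \<longrightarrow> s 1 \<le> s i" for i
  proof (induction i)
    case 0 then show ?case by simp
  next
    case (Suc i)
    show ?case
    proof (cases "i = 0")
      case True then show ?thesis by simp
    next
      case False
      show ?thesis
      proof (intro impI)
        assume "1 \<le> Suc i" "Suc i \<le> r"
        then have "i \<in> {1..<r}" using False by auto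
        then have "s i \<le> s (Suc i)" using mono by blast
        then show "s 1 \<le> s (Suc i)" using Suc.IH False \<open>Suc i \<le> r\<close> by auto
      qed
    qed
  qed
  define s' where "s' j = s (Suc j)" for j
  have s'pos: "\<forall>j\<in>{1..k}. s' j \<ge> 1"
  proof
    fix j assume "j \<in> {1..k}"
    then have "1 \<le> Suc j" "Suc j \<le> r" using rk by auto
    then show "s' j \<ge> 1" using sge[of "Suc j"] s1 unfolding s'_def by auto
  qed
  define V1 where "V1 = {0..<m}"
  define V2 where "V2 = {m..<m+n}"
  have V1f: "finite V1" and V2f: "finite V2" and cV1: "card V1 = m" and cV2: "card V2 = n"
    and disj: "V1 \<inter> V2 = {}"
    unfolding V1_def V2_def by auto
  define A where "A = real (\<Sum>i=1..k. s' i) - real k"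
  have sumk: "(\<Sum>i=1..k. s' i) \<ge> k"
  proof -
    have "(\<Sum>i=1..k. (1::nat)) \<le> (\<Sum>i=1..k. s' i)" using s'pos by (intro sum_mono) auto
    then show ?thesis by simp
  qed
  have A0: "A \<ge> 0" unfolding A_def using sumk by (simp add: of_nat_le_iff[symmetric] del: of_nat_sum)
  have A_eq: "real (\<Sum>i=2..r. s i) - real r + 1 = A"
  proof -
    have "(\<Sum>i=2..r. s i) = (\<Sum>i=Suc 1..Suc k. s i)" using rk by (simp add: numeral_2_eq_2)
    also have "\<dots> = (\<Sum>i=1..k. s' i)" unfolding s'_def by (simp only: sum.shift_bounds_cl_Suc_ivl)
    finally show ?thesis unfolding A_def using rk by simp
  qed
  define P' where "P' = real (\<Prod>i=1..k-1. s' i)"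
  have P'1: "P' \<ge> 1"
  proof -
    have "(\<Prod>i=1..k-1. s' i) \<ge> 1" using s'pos by (intro prod_ge_1) auto
    then show ?thesis unfolding P'_def by (metis of_nat_1 of_nat_le_iff)
  qed
  have P_eq: "real (\<Prod>i=1..r-1. s i) = real (s 1) * P'"
    unfolding P'_def s'_def using prod_shift1[of k s] k2 rk by simp
  define E where "E = A / real k * real n powr (real k - 1 / P')"
  have E0: "E \<ge> 0" unfolding E_def using A0 by simp
  define RHS where "RHS = A powr (1 / real (s 1)) / real k * real m * real n powr (real k - 1 / (real (s 1) * P'))
     + (real (s 1) - 1) * real (n choose k)"
  have key: "real (card H) \<le> RHS" if sb: "semibipartite V1 V2 r H" and nc: "\<not> has_ordered_copy V1 V2 r s H" for H
  proof -
    define I where "I = {T. T \<subseteq> V2 \<and> card T = k}"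
    have L: "real (card {T\<in>I. \<forall>v\<in>S. insert v T \<in> H}) \<le> E"
      if S: "S \<subseteq> V1" "card S = s 1" for S
    proof -
      let ?L = "{T\<in>I. \<forall>v\<in>S. insert v T \<in> H}"
      have Lsub: "?L \<subseteq> {e. e \<subseteq> V2 \<and> card e = k}" unfolding I_def by auto
      have nck: "\<not> kcopy k s' ?L"
      proof
        assume cp: "kcopy k s' ?L"
        have Sf: "finite S" using S(1) V1f by (rule finite_subset)
        have Ld: "\<forall>T\<in>?L. T \<inter> S = {}" using S(1) disj unfolding I_def by blast
        have Li: "\<forall>T\<in>?L. \<forall>v\<in>S. insert v T \<in> H" by blast
        obtain W where W1: "\<forall>i\<in>{1..Suc k}. finite (W i) \<and> card (W i) = (if i = 1 then s 1 else s' (i - 1))"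
          and W0: "W 1 = S" and W2: "\<forall>i\<in>{2..Suc k}. W i \<subseteq> \<Union>?L"
          and W3: "\<forall>i\<in>{1..Suc k}. \<forall>j\<in>{1..Suc k}. i \<noteq> j \<longrightarrow> W i \<inter> W j = {}"
          and W4: "\<forall>f. (\<forall>i\<in>{1..Suc k}. f i \<in> W i) \<longrightarrow> f ` {1..Suc k} \<in> H"
          using lift[OF s'pos cp Sf S(2) Ld Li] by blast
        have C1: "\<forall>i\<in>{1..r}. finite (W i) \<and> card (W i) = s i"
        proof
          fix i assume i: "i \<in> {1..r}"
          then have i': "i \<in> {1..Suc k}" using rk by simp
          show "finite (W i) \<and> card (W i) = s i"
          proof (cases "i = 1")
            case True then show ?thesis using W1 i' by simp
          next
            case False
            then have "Suc (i - 1) = i" using i by auto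
            then show ?thesis using W1 i' False unfolding s'_def by simp
          qed
        qed
        have C2: "W 1 \<subseteq> V1" using W0 S by simp
        have C3: "\<forall>i\<in>{2..r}. W i \<subseteq> V2" using W2 rk unfolding I_def by blast
        have "has_ordered_copy V1 V2 r s H"
          unfolding has_ordered_copy_def using C1 C2 C3 W3 W4 rk by blast
        then show False using nc by simp
      qed
      have "real (card ?L) \<le> (real (\<Sum>i=1..k. s' i) - real k) / real k
         * real (card V2) powr (real k - 1 / real (\<Prod>i=1..k-1. s' i))"
        using lemA[of k V2 s' ?L] k2 V2f cV2 n1 s'pos Lsub nck by simp
      then show ?thesis unfolding E_def A_def P'_def cV2 by simp
    qed
    have SLr: "real (\<Sum>T\<in>I. card {v\<in>V1. insert v T \<in> H}) \<le> (real (s 1) - 1) * real (card I)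
          + real (card I) powr (1 - 1/real (s 1)) * real (card V1) * E powr (1/real (s 1))"
      by (rule SL[OF V1f _ s1 E0]) (use L I_def V2f in auto)
    have dc: "(\<Sum>T\<in>I. card {v\<in>V1. insert v T \<in> H}) = card H"
      unfolding I_def using dc_main[OF sb V1f V2f] unfolding k_def .
    have cI: "card I = n choose k" unfolding I_def using n_subsets[OF V2f] cV2 by simp
    have NI: "real (card I) \<le> real n ^ k / real k" unfolding cI using k2 by (intro choose_le_div) auto
    have ar: "real (card I) powr (1 - 1/real (s 1)) * real m * E powr (1/real (s 1))
        \<le> A powr (1/real (s 1)) / real k * real m * real n powr (real k - 1/(real (s 1) * P'))"
      unfolding E_def using arith_main[of "real n" "s 1" k P' "real (card I)" A "real m"] n1 s1 k2 P'1 NI A0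
      by simp
    show ?thesis using SLr dc ar cI cV1 unfolding RHS_def by simp
  qed
  define HS where "HS = {H. semibipartite V1 V2 r H \<and> \<not> has_ordered_copy V1 V2 r s H}"
  have Zeq: "Z m n r s = Max (card ` HS)"
  proof -
    have "{card H | H :: nat set set. semibipartite V1 V2 r H \<and> \<not> has_ordered_copy V1 V2 r s H} = card ` HS"
      unfolding HS_def by blast
    then show ?thesis unfolding Z_def V1_def V2_def by simp
  qed
  have HSf: "finite HS"
  proof (rule finite_subset)
    show "HS \<subseteq> Pow (Pow (V1 \<union> V2))" unfolding HS_def semibipartite_def by auto
    show "finite (Pow (Pow (V1 \<union> V2)))" using V1f V2f by simp
  qed
  have emp: "{} \<in> HS"
  proof -
    have "semibipartite V1 V2 r {}" unfolding semibipartite_def using disj by simp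
    moreover have "\<not> has_ordered_copy V1 V2 r s {}"
    proof
      assume "has_ordered_copy V1 V2 r s {}"
      then obtain W :: "nat \<Rightarrow> nat set" where W1: "\<forall>i\<in>{1..r}. finite (W i) \<and> card (W i) = s i"
        and W4: "\<forall>f. (\<forall>i\<in>{1..r}. f i \<in> W i) \<longrightarrow> f ` {1..r} \<in> {}"
        unfolding has_ordered_copy_def by blast
      have ne: "\<exists>x. x \<in> W i" if "i \<in> {1..r}" for i
      proof -
        have "s i \<ge> 1" using sge[of i] s1 that by auto
        moreover have "card (W i) = s i" using W1 that by blast
        ultimately have "W i \<noteq> {}" by auto
        then show ?thesis by auto
      qed
      define f where "f i = (SOME x. x \<in> W i)" for i
      have "\<forall>i\<in>{1..r}. f i \<in> W i" unfolding f_def using ne by (auto intro: someI_ex)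
      then show False using W4 by blast
    qed
    ultimately show ?thesis unfolding HS_def by simp
  qed
  have "Z m n r s \<in> card ` HS" unfolding Zeq using HSf emp by (intro Max_in) auto
  then obtain H where H: "H \<in> HS" "Z m n r s = card H" by blast
  have "real (Z m n r s) \<le> RHS" using key H unfolding HS_def by auto
  moreover have "RHS = (real (\<Sum>i=2..r. s i) - real r + 1) powr (1 / real (s 1)) / (real r - 1)
       * real m * real n powr (real r - 1 - 1 / real (\<Prod>i=1..r-1. s i))
     + (real (s 1) - 1) * real (n choose (r - 1))"
    unfolding RHS_def A_eq P_eq using rk by simp
  ultimately show ?thesis by simp
qed

end
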